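(* Consider the ODE system \[ \dot S = -\kappa\rho S(\pi_1 W_1+\pi_2 W_2),\quad \dot I = \kappa\rho S(\pi_1 W_1+\pi_2 W_2)-\gamma I,\quad \dot R = \gamma I, \] \[ \dot W_1 = \alpha\eta I+\delta_2 W_2-(\xi_1+\delta_1)W_1,\quad \dot W_2 = \alpha(1-\eta) I+\delta_1 W_1-(\xi_2+\delta_2)W_2, \] with parameters $\kappa,\rho,\pi_1,\pi_2,\gamma,\alpha,\xi_1,\xi_2>0$, $\delta_1,\delta_2\ge 0$, $0\le\eta\le 1$, and total population $N$, with disease-free equilibrium $(S,I,R,W_1,W_2)=(N,0,0,0,0)$. Let $\tau_i=1/(\xi_i+\delta_i)$ and $\phi_i=\delta_i/(\xi_i+\delta_i)$ for $i=1,2$. Then the basic reproduction number of this system, computed by the next generation method, is \[ \mathcal{R}_0=\frac{\alpha\kappa\rho N}{\gamma}\left(\pi_1\tau_1\,\frac{\eta+(1-\eta)\phi_2}{1-\phi_1\phi_2}+\pi_2\tau_2\,\frac{(1-\eta)+\eta\phi_1}{1-\phi_1\phi_2}\right). \]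
   Context: The next generation method: with infected compartments ordered $(I,W_1,W_2)$, let $F$ be the Jacobian at the disease-free equilibrium of the new-infection terms, namely the term $\kappa\rho S(\pi_1W_1+\pi_2W_2)$ in the $I$ equation (all other entries zero), and let $V$ be the Jacobian at the disease-free equilibrium of the remaining transition terms (so the infected subsystem linearization is $F-V$, with shedding $\alpha\eta I,\alpha(1-\eta)I$, conversions $\delta_i W_i$, removals and recovery all placed in $V$). Then $\mathcal{R}_0$ is the spectral radius of $FV^{-1}$. Here $S,I,R$ are numbers of susceptible, infectious, recovered people and $W_1,W_2$ are environmental concentrations of labile and persistent pathogens. *)

theory Defs
  imports "Jordan_Normal_Form.Spectral_Radius" "Jordan_Normal_Form.Gauss_Jordan_Elimination" "HOL-Analysis.Derivative"
begin

text \<open>Infected compartments are ordered (I, W1, W2), indexed 0, 1, 2.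
  Each vector field below is a function of the index i and of the state (S, I, W1, W2)
  (R does not enter the infected subsystem).\<close>

definition newinf :: "real \<Rightarrow> real \<Rightarrow> real \<Rightarrow> real \<Rightarrow> nat \<Rightarrow> real \<Rightarrow> real \<Rightarrow> real \<Rightarrow> real \<Rightarrow> real" where
  "newinf \<kappa> \<rho> \<pi>1 \<pi>2 i S I W1 W2 =
     (if i = 0 then \<kappa> * \<rho> * S * (\<pi>1 * W1 + \<pi>2 * W2) else 0)"

text \<open>Remaining transition terms, with the sign convention that the infected
  subsystem is  d/dt x = newinf - trans.\<close>
definition trans_terms :: "real \<Rightarrow> real \<Rightarrow> real \<Rightarrow> real \<Rightarrow> real \<Rightarrow> real \<Rightarrow> real \<Rightarrow>
    nat \<Rightarrow> real \<Rightarrow> real \<Rightarrow> real \<Rightarrow> real \<Rightarrow> real" where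
  "trans_terms \<gamma> \<alpha> \<eta> \<delta>1 \<delta>2 \<xi>1 \<xi>2 i S I W1 W2 =
     (if i = 0 then \<gamma> * I
      else if i = 1 then - (\<alpha> * \<eta> * I + \<delta>2 * W2 - (\<xi>1 + \<delta>1) * W1)
      else - (\<alpha> * (1 - \<eta>) * I + \<delta>1 * W1 - (\<xi>2 + \<delta>2) * W2))"

definition jac_dfe :: "(nat \<Rightarrow> real \<Rightarrow> real \<Rightarrow> real \<Rightarrow> real \<Rightarrow> real) \<Rightarrow> real \<Rightarrow> real mat" where
  "jac_dfe f N = Matrix.mat 3 3 (\<lambda>(i, j). deriv (\<lambda>t. f i N (if j = 0 then t else 0)
        (if j = 1 then t else 0) (if j = 2 then t else 0)) 0)"

definition next_gen_R0 :: "real mat \<Rightarrow> real mat \<Rightarrow> real" where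
  "next_gen_R0 F V = spectral_radius (Matrix.map_mat complex_of_real (F * the (mat_inverse V)))"

end

theory Submission
  imports Defs
begin
lemma deriv_lin: "(\<And>t. f t = c * t) \<Longrightarrow> deriv f 0 = (c::real)"
proof -
  assume h: "\<And>t. f t = c * t"
  have "f = (\<lambda>t. c * t)" using h by auto
  moreover have "((\<lambda>t. c * t) has_real_derivative c) (at 0)"
    using DERIV_cmult_Id by blast
  ultimately show ?thesis using DERIV_imp_deriv by blast
qed

lemma idx3: "(i::nat) < 3 \<Longrightarrow> P 0 \<Longrightarrow> P 1 \<Longrightarrow> P 2 \<Longrightarrow> P i"
  by (cases i; cases "i - 1"; auto simp: numeral_2_eq_2)

lemma sum3: "(\<Sum>i\<in>{0..<3::nat}. f i) = f 0 + f 1 + f (2::nat)"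
  by (simp add: numeral_3_eq_3 numeral_2_eq_2)

lemma F_eq: "jac_dfe (newinf \<kappa> \<rho> \<pi>1 \<pi>2) N =
  Matrix.mat 3 3 (\<lambda>(i,j). if i = 0 \<and> j = 1 then \<kappa>*\<rho>*N*\<pi>1 else if i = 0 \<and> j = 2 then \<kappa>*\<rho>*N*\<pi>2 else 0)"
  unfolding jac_dfe_def
  apply (rule eq_matI)
    apply simp_all
  apply (erule idx3; erule idx3; simp)
  by (rule deriv_lin, simp add: newinf_def algebra_simps)+

lemma V_eq: "jac_dfe (trans_terms \<gamma> \<alpha> \<eta> \<delta>1 \<delta>2 \<xi>1 \<xi>2) N =
  Matrix.mat 3 3 (\<lambda>(i,j). if i = 0 then (if j = 0 then \<gamma> else 0)
    else if i = 1 then (if j = 0 then - \<alpha>*\<eta> else if j = 1 then \<xi>1+\<delta>1 else -\<delta>2)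
    else (if j = 0 then - \<alpha>*(1-\<eta>) else if j = 1 then -\<delta>1 else \<xi>2+\<delta>2))"
  unfolding jac_dfe_def
  apply (rule eq_matI)
    apply simp_all
  apply (erule idx3; erule idx3; simp)
  by (rule deriv_lin, simp add: trans_terms_def algebra_simps)+

lemma main:
  fixes \<kappa> \<rho> \<pi>1 \<pi>2 \<gamma> \<alpha> \<eta> \<delta>1 \<delta>2 \<xi>1 \<xi>2 N :: real
  assumes "\<kappa> > 0" "\<rho> > 0" "\<pi>1 > 0" "\<pi>2 > 0" "\<gamma> > 0" "\<alpha> > 0" "\<xi>1 > 0" "\<xi>2 > 0"
    and "\<delta>1 \<ge> 0" "\<delta>2 \<ge> 0" "0 \<le> \<eta>" "\<eta> \<le> 1" "N > 0"
  shows "let F = jac_dfe (newinf \<kappa> \<rho> \<pi>1 \<pi>2) N;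
             V = jac_dfe (trans_terms \<gamma> \<alpha> \<eta> \<delta>1 \<delta>2 \<xi>1 \<xi>2) N;
             \<tau>1 = 1 / (\<xi>1 + \<delta>1); \<tau>2 = 1 / (\<xi>2 + \<delta>2);
             \<phi>1 = \<delta>1 / (\<xi>1 + \<delta>1); \<phi>2 = \<delta>2 / (\<xi>2 + \<delta>2)
         in invertible_mat V \<and>
            next_gen_R0 F V =
              \<alpha> * \<kappa> * \<rho> * N / \<gamma> *
                (\<pi>1 * \<tau>1 * ((\<eta> + (1 - \<eta>) * \<phi>2) / (1 - \<phi>1 * \<phi>2))
               + \<pi>2 * \<tau>2 * (((1 - \<eta>) + \<eta> * \<phi>1) / (1 - \<phi>1 * \<phi>2)))"
proof -
  define A where "A = \<xi>1 + \<delta>1"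
  define B where "B = \<xi>2 + \<delta>2"
  define D where "D = A * B - \<delta>1 * \<delta>2"
  have Apos: "A > 0" and Bpos: "B > 0" using assms by (auto simp: A_def B_def)
  have Dpos: "D > 0"
  proof -
    have "0 \<le> \<delta>1*\<xi>2" "0 \<le> \<delta>2*\<xi>1" "0 < \<xi>1*\<xi>2" using assms by auto
    thus ?thesis unfolding D_def A_def B_def by (simp add: algebra_simps)
  qed
  have gne: "\<gamma> \<noteq> 0" using assms by auto
  have hD: "D = A*B - \<delta>1*\<delta>2" by (simp add: D_def)
  have Dne: "D \<noteq> 0" using Dpos by auto
  define Fm :: "real mat" where "Fm = Matrix.mat 3 3 (\<lambda>(i,j). if i = 0 \<and> j = 1 then \<kappa>*\<rho>*N*\<pi>1 else if i = 0 \<and> j = 2 then \<kappa>*\<rho>*N*\<pi>2 else 0)"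
  define Vm :: "real mat" where "Vm = Matrix.mat 3 3 (\<lambda>(i,j). if i = 0 then (if j = 0 then \<gamma> else 0)
    else if i = 1 then (if j = 0 then - \<alpha>*\<eta> else if j = 1 then A else -\<delta>2)
    else (if j = 0 then - \<alpha>*(1-\<eta>) else if j = 1 then -\<delta>1 else B))"
  define Wm :: "real mat" where "Wm = Matrix.mat 3 3 (\<lambda>(i,j). if i = 0 then (if j = 0 then 1/\<gamma> else 0)
    else if i = 1 then (if j = 0 then \<alpha>*(B*\<eta>+\<delta>2*(1-\<eta>))/(\<gamma>*D) else if j = 1 then B/D else \<delta>2/D)
    else (if j = 0 then \<alpha>*(\<delta>1*\<eta>+A*(1-\<eta>))/(\<gamma>*D) else if j = 1 then \<delta>1/D else A/D))"
  define r where "r = \<kappa>*\<rho>*N*\<pi>1 * (\<alpha>*(B*\<eta>+\<delta>2*(1-\<eta>))/(\<gamma>*D)) + \<kappa>*\<rho>*N*\<pi>2 * (\<alpha>*(\<delta>1*\<eta>+A*(1-\<eta>))/(\<gamma>*D))"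
  define Pm :: "real mat" where "Pm = Matrix.mat 3 3 (\<lambda>(i,j). if i = 0 then (if j = 0 then r
     else if j = 1 then \<kappa>*\<rho>*N*\<pi>1 * (B/D) + \<kappa>*\<rho>*N*\<pi>2 * (\<delta>1/D)
     else \<kappa>*\<rho>*N*\<pi>1 * (\<delta>2/D) + \<kappa>*\<rho>*N*\<pi>2 * (A/D)) else 0)"
  have cV: "Vm \<in> carrier_mat 3 3" and cW: "Wm \<in> carrier_mat 3 3" and cF: "Fm \<in> carrier_mat 3 3"
    by (auto simp: Vm_def Wm_def Fm_def)
  have VW: "Vm * Wm = 1\<^sub>m 3"
  proof (rule eq_matI)
    fix i j assume "i < dim_row (1\<^sub>m 3)" "j < dim_col (1\<^sub>m 3)"
    hence "i = 0 \<or> i = 1 \<or> i = 2" "j = 0 \<or> j = 1 \<or> j = 2" by (auto simp: Vm_def Wm_def)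
    thus "(Vm * Wm) $$ (i,j) = (1\<^sub>m 3) $$ (i,j)"
      using Dne gne apply (elim disjE) apply (simp_all add: Vm_def Wm_def scalar_prod_def sum3 field_simps) apply (simp_all add: hD algebra_simps) done
  qed (auto simp: Vm_def Wm_def)
  have WV: "Wm * Vm = 1\<^sub>m 3"
  proof (rule eq_matI)
    fix i j assume "i < dim_row (1\<^sub>m 3)" "j < dim_col (1\<^sub>m 3)"
    hence "i = 0 \<or> i = 1 \<or> i = 2" "j = 0 \<or> j = 1 \<or> j = 2" by (auto simp: Vm_def Wm_def)
    thus "(Wm * Vm) $$ (i,j) = (1\<^sub>m 3) $$ (i,j)"
      using Dne gne apply (elim disjE) apply (simp_all add: Vm_def Wm_def scalar_prod_def sum3 field_simps) apply (simp_all add: hD algebra_simps) done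
  qed (auto simp: Vm_def Wm_def)
  have inv: "invertible_mat Vm"
    unfolding invertible_mat_def inverts_mat_def square_mat.simps
    using VW WV cV cW by (intro conjI exI[of _ Wm]) auto
  have U: "Vm \<in> Units (ring_mat TYPE(real) 3 ())"
    unfolding Units_def ring_mat_simps using VW WV cV cW by auto
  obtain Bi where Bi: "mat_inverse Vm = Some Bi"
    using mat_inverse(1)[OF cV, of "()"] U by (cases "mat_inverse Vm") auto
  from mat_inverse(2)[OF cV Bi] have BiV: "Bi * Vm = 1\<^sub>m 3" and cB: "Bi \<in> carrier_mat 3 3" by auto
  have "Bi = Bi * (Vm * Wm)" using VW cB by simp
  also have "\<dots> = (Bi * Vm) * Wm" using cB cV cW by simp
  also have "\<dots> = Wm" using BiV cW by simp
  finally have BiW: "Bi = Wm" .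
  have FW: "Fm * Wm = Pm"
  proof (rule eq_matI)
    fix i j assume "i < dim_row (Pm)" "j < dim_col (Pm)"
    hence "i = 0 \<or> i = 1 \<or> i = 2" "j = 0 \<or> j = 1 \<or> j = 2" by (auto simp: Fm_def Wm_def Pm_def)
    thus "(Fm * Wm) $$ (i,j) = (Pm) $$ (i,j)"
      by (elim disjE) (simp_all add: Fm_def Wm_def Pm_def scalar_prod_def sum3 r_def)
  qed (auto simp: Fm_def Wm_def Pm_def)
  define C where "C = Matrix.map_mat complex_of_real Pm"
  have cC: "C \<in> carrier_mat 3 3" by (simp add: C_def Pm_def)
  have ut: "upper_triangular C"
    unfolding upper_triangular_def C_def Pm_def by auto
  have diag: "diag_mat C = [complex_of_real r, 0, 0]"
    by (simp add: diag_mat_def C_def Pm_def upt_rec numeral_3_eq_3)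
  have spec: "spectrum C = {complex_of_real r, 0}"
    unfolding spectrum_root_char_poly[OF cC] char_poly_upper_triangular[OF cC ut] diag
    by (auto simp: algebra_simps)
  have rpos: "r \<ge> 0" unfolding r_def using assms Apos Bpos Dpos
    by (intro add_nonneg_nonneg mult_nonneg_nonneg divide_nonneg_nonneg; simp)
  have sr: "spectral_radius C = r"
    unfolding spectral_radius_def spec using rpos by simp
  have req: "r = \<alpha> * \<kappa> * \<rho> * N / \<gamma> *
                (\<pi>1 * (1/A) * ((\<eta> + (1 - \<eta>) * (\<delta>2/B)) / (1 - (\<delta>1/A) * (\<delta>2/B)))
               + \<pi>2 * (1/B) * (((1 - \<eta>) + \<eta> * (\<delta>1/A)) / (1 - (\<delta>1/A) * (\<delta>2/B))))"
  proof -
    have e: "1 - (\<delta>1/A) * (\<delta>2/B) = D / (A*B)" using Apos Bpos unfolding D_def by (simp add: field_simps)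
    show ?thesis unfolding e r_def using Apos Bpos Dpos gne by (simp add: field_simps)
  qed
  show ?thesis
    unfolding Let_def F_eq V_eq next_gen_R0_def
    apply (fold Fm_def A_def B_def)
    apply (fold Vm_def)
    unfolding Bi BiW FW option.sel
    apply (fold C_def)
    unfolding sr req A_def B_def using inv by simp
qed

theorem proposition1:
  fixes \<kappa> \<rho> \<pi>1 \<pi>2 \<gamma> \<alpha> \<eta> \<delta>1 \<delta>2 \<xi>1 \<xi>2 N :: real
  assumes "\<kappa> > 0" "\<rho> > 0" "\<pi>1 > 0" "\<pi>2 > 0" "\<gamma> > 0" "\<alpha> > 0" "\<xi>1 > 0" "\<xi>2 > 0"
    and "\<delta>1 \<ge> 0" "\<delta>2 \<ge> 0" "0 \<le> \<eta>" "\<eta> \<le> 1" "N > 0"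
  shows "let F = jac_dfe (newinf \<kappa> \<rho> \<pi>1 \<pi>2) N;
             V = jac_dfe (trans_terms \<gamma> \<alpha> \<eta> \<delta>1 \<delta>2 \<xi>1 \<xi>2) N;
             \<tau>1 = 1 / (\<xi>1 + \<delta>1); \<tau>2 = 1 / (\<xi>2 + \<delta>2);
             \<phi>1 = \<delta>1 / (\<xi>1 + \<delta>1); \<phi>2 = \<delta>2 / (\<xi>2 + \<delta>2)
         in invertible_mat V \<and>
            next_gen_R0 F V =
              \<alpha> * \<kappa> * \<rho> * N / \<gamma> *
                (\<pi>1 * \<tau>1 * ((\<eta> + (1 - \<eta>) * \<phi>2) / (1 - \<phi>1 * \<phi>2))
               + \<pi>2 * \<tau>2 * (((1 - \<eta>) + \<eta> * \<phi>1) / (1 - \<phi>1 * \<phi>2)))"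
  using assms by (rule main)

end
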